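(* If a domino tiling system $\mathcal{D}$ is solvable, then there exists a $\mathcal{D}$-snake.
   Context: A domino tiling system is $\mathcal{D}=(\mathrm{Col},\mathrm{T},\mathrm{white})$ with $\mathrm{Col}$ a finite set of colours, $\mathrm{T}\subseteq\mathrm{Col}^4$ a set of tiles $(c_l,c_d,c_r,c_u)$ and $\mathrm{white}\in\mathrm{Col}$; throughout, $\mathrm{T}$ contains no tile with more than two white sides. A tile is left-/down-/right-/up-border if $c_l$/$c_d$/$c_r$/$c_u$ equals white. Tiles $t=(c_l,c_d,c_r,c_u)$, $t'=(c'_l,c'_d,c'_r,c'_u)$ are H-compatible if $c_r=c'_l$ and V-compatible if $c_u=c'_d$. $\mathcal{D}$ covers $\mathbb{Z}_n\times\mathbb{Z}_m$ ($n,m$ positive) if there is $\xi:\mathbb{Z}_n\times\mathbb{Z}_m\to\mathrm{T}$ such that for all $(x,y)$ with $\xi(x,y)=(c_l,c_d,c_r,c_u)$: $x=0$ iff $c_l$ is white, $x=n-1$ iff $c_r$ is white, $y=0$ iff $c_d$ is white, $y=m-1$ iff $c_u$ is white; $\xi(x,y),\xi(x+1,y)$ are H-compatible whenever $x+1<n$; $\xi(x,y),\xi(x,y+1)$ are V-compatible whenever $y+1<m$. $\mathcal{D}$ is solvable if it covers some $\mathbb{Z}_n\times\mathbb{Z}_m$. Use a role name $r$, individual names $\mathsf{ld},\mathsf{rd},\mathsf{lu},\mathsf{ru}$ (the named ones) and concept names $C_t$ ($t\in\mathrm{T}$); an element carries $t$ if it lies in $C_t^{\mathcal{I}}$. An interpretation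 $\mathcal{I}$ is a $\mathcal{D}$-snake if: (SPath) there is an $r^+$-path starting at $\mathsf{ld}^{\mathcal{I}}$, later passing $\mathsf{rd}^{\mathcal{I}}$, later $\mathsf{lu}^{\mathcal{I}}$ and ending at $\mathsf{ru}^{\mathcal{I}}$ (at positions $1<i<j<$ last); (SNoLoop) no named element $r^+$-reaches itself; (SUniqTil) every element $r^*$-reachable from $\mathsf{ld}^{\mathcal{I}}$ carries exactly one tile; (SSpecTil) the named elements are exactly the elements $r^*$-reachable from $\mathsf{ld}^{\mathcal{I}}$ carrying a tile with two white sides, and $\mathsf{ld}^{\mathcal{I}}$ carries a left- and down-border tile, $\mathsf{rd}^{\mathcal{I}}$ a right- and down-border tile, $\mathsf{lu}^{\mathcal{I}}$ a left- and up-border tile, $\mathsf{ru}^{\mathcal{I}}$ a right- and up-border tile; (SHori) for every element $d\neq\mathsf{ru}^{\mathcal{I}}$ that is $r^*$-reachable from $\mathsf{ld}^{\mathcal{I}}$ and carries $t=(c_l,c_d,c_r,c_u)$ there is a tile $t'=(c'_l,c'_d,c'_r,c'_u)$ carried by all $r$-successors of $d$ such that (i) $t,t'$ are H-compatible, (ii) if $c_d$ is white then ($c_r$ is not white iff $c'_d$ is white), (iii) if $c_u$ is white then $c'_u$ is white; (SLen) there is a unique positive integer $N$ such that all $r^+$-paths from $\mathsf{ld}^{\mathcal{I}}$ to $\mathsf{rd}^{\mathcal{I}}$ have length $N-1$, and $\mathsf{rd}^{\mathcal{I}}$ is the only element $r^{N-1}$-reachable from $\mathsf{ld}^{\mathcal{I}}$;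 (SVerti) for every element $d$ $r^*$-reachable from $\mathsf{ld}^{\mathcal{I}}$ carrying a tile $t$ that is not up-border, there is a tile $t'$ carried by all elements $r^N$-reachable from $d$ (with $N$ from (SLen)) such that $t,t'$ are V-compatible and $t$ is left-border (resp. right-border) iff $t'$ is. Path length is the number of edges. *)

theory Defs
  imports Main
begin

type_synonym 'c tile = "'c \<times> 'c \<times> 'c \<times> 'c"

definition cl :: "'c tile \<Rightarrow> 'c" where "cl t = fst t"
definition cd :: "'c tile \<Rightarrow> 'c" where "cd t = fst (snd t)"
definition cr :: "'c tile \<Rightarrow> 'c" where "cr t = fst (snd (snd t))"
definition cu :: "'c tile \<Rightarrow> 'c" where "cu t = snd (snd (snd t))"

definition num_white :: "'c \<Rightarrow> 'c tile \<Rightarrow> nat" where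
  "num_white w t = (if cl t = w then 1 else 0) + (if cd t = w then 1 else 0)
                 + (if cr t = w then 1 else 0) + (if cu t = w then 1 else 0)"

definition domino_system :: "'c set \<Rightarrow> 'c tile set \<Rightarrow> 'c \<Rightarrow> bool" where
  "domino_system Col T w \<longleftrightarrow> finite Col \<and> w \<in> Col
     \<and> (\<forall>t\<in>T. cl t \<in> Col \<and> cd t \<in> Col \<and> cr t \<in> Col \<and> cu t \<in> Col)
     \<and> (\<forall>t\<in>T. num_white w t \<le> 2)"

definition H_compat :: "'c tile \<Rightarrow> 'c tile \<Rightarrow> bool" where
  "H_compat t t' \<longleftrightarrow> cr t = cl t'"
definition V_compat :: "'c tile \<Rightarrow> 'c tile \<Rightarrow> bool" where
  "V_compat t t' \<longleftrightarrow> cu t = cd t'"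

definition covers :: "'c tile set \<Rightarrow> 'c \<Rightarrow> nat \<Rightarrow> nat \<Rightarrow> bool" where
  "covers T w n m \<longleftrightarrow> (\<exists>\<xi> :: nat \<times> nat \<Rightarrow> 'c tile.
      (\<forall>x<n. \<forall>y<m. \<xi> (x,y) \<in> T
         \<and> (x = 0 \<longleftrightarrow> cl (\<xi> (x,y)) = w) \<and> (x = n - 1 \<longleftrightarrow> cr (\<xi> (x,y)) = w)
         \<and> (y = 0 \<longleftrightarrow> cd (\<xi> (x,y)) = w) \<and> (y = m - 1 \<longleftrightarrow> cu (\<xi> (x,y)) = w))
    \<and> (\<forall>x y. x + 1 < n \<and> y < m \<longrightarrow> H_compat (\<xi> (x,y)) (\<xi> (x+1,y)))
    \<and> (\<forall>x y. x < n \<and> y + 1 < m \<longrightarrow> V_compat (\<xi> (x,y)) (\<xi> (x,y+1))))"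

definition solvable :: "'c tile set \<Rightarrow> 'c \<Rightarrow> bool" where
  "solvable T w \<longleftrightarrow> (\<exists>n m. 0 < n \<and> 0 < m \<and> covers T w n m)"

text \<open>An interpretation: domain nat, role r, named individuals ld rd lu ru,
  concept names C t for t in T.\<close>

definition carries :: "'c tile set \<Rightarrow> ('c tile \<Rightarrow> 'd set) \<Rightarrow> 'd \<Rightarrow> 'c tile \<Rightarrow> bool" where
  "carries T C d t \<longleftrightarrow> t \<in> T \<and> d \<in> C t"

definition SLen_prop :: "('d \<times> 'd) set \<Rightarrow> 'd \<Rightarrow> 'd \<Rightarrow> nat \<Rightarrow> bool" where
  "SLen_prop r ld rd N \<longleftrightarrow> 0 < N
     \<and> (\<forall>k. 0 < k \<and> (ld, rd) \<in> r ^^ k \<longrightarrow> k = N - 1)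
     \<and> {d. (ld, d) \<in> r ^^ (N - 1)} = {rd}"

definition SVerti_prop :: "'c tile set \<Rightarrow> 'c \<Rightarrow> ('d \<times> 'd) set \<Rightarrow> 'd \<Rightarrow>
    ('c tile \<Rightarrow> 'd set) \<Rightarrow> nat \<Rightarrow> bool" where
  "SVerti_prop T w r ld C N \<longleftrightarrow> (\<forall>d t. (ld, d) \<in> r\<^sup>* \<and> carries T C d t \<and> cu t \<noteq> w \<longrightarrow>
      (\<exists>t'\<in>T. (\<forall>e. (d, e) \<in> r ^^ N \<longrightarrow> e \<in> C t') \<and> V_compat t t'
         \<and> (cl t = w \<longleftrightarrow> cl t' = w) \<and> (cr t = w \<longleftrightarrow> cr t' = w)))"

definition is_snake :: "'c tile set \<Rightarrow> 'c \<Rightarrow> ('d \<times> 'd) set \<Rightarrow> 'd \<Rightarrow> 'd \<Rightarrow> 'd \<Rightarrow> 'd \<Rightarrow>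
    ('c tile \<Rightarrow> 'd set) \<Rightarrow> bool" where
  "is_snake T w r ld rd lu ru C \<longleftrightarrow>
    \<comment> \<open>SPath\<close>
    (\<exists>p :: nat \<Rightarrow> 'd. \<exists>L i j. 1 \<le> i \<and> i < j \<and> j < L \<and> p 0 = ld \<and> p i = rd \<and> p j = lu \<and> p L = ru
        \<and> (\<forall>k<L. (p k, p (Suc k)) \<in> r))
    \<comment> \<open>SNoLoop\<close>
  \<and> (\<forall>a\<in>{ld, rd, lu, ru}. (a, a) \<notin> r\<^sup>+)
    \<comment> \<open>SUniqTil\<close>
  \<and> (\<forall>d. (ld, d) \<in> r\<^sup>* \<longrightarrow> (\<exists>!t. carries T C d t))
    \<comment> \<open>SSpecTil\<close>
  \<and> {ld, rd, lu, ru} = {d. (ld, d) \<in> r\<^sup>* \<and> (\<exists>t. carries T C d t \<and> num_white w t = 2)}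
  \<and> (\<exists>t. carries T C ld t \<and> cl t = w \<and> cd t = w)
  \<and> (\<exists>t. carries T C rd t \<and> cr t = w \<and> cd t = w)
  \<and> (\<exists>t. carries T C lu t \<and> cl t = w \<and> cu t = w)
  \<and> (\<exists>t. carries T C ru t \<and> cr t = w \<and> cu t = w)
    \<comment> \<open>SHori\<close>
  \<and> (\<forall>d t. (ld, d) \<in> r\<^sup>* \<and> d \<noteq> ru \<and> carries T C d t \<longrightarrow>
      (\<exists>t'\<in>T. (\<forall>e. (d, e) \<in> r \<longrightarrow> e \<in> C t') \<and> H_compat t t'
         \<and> (cd t = w \<longrightarrow> (cr t \<noteq> w \<longleftrightarrow> cd t' = w))
         \<and> (cu t = w \<longrightarrow> cu t' = w)))
    \<comment> \<open>SLen\<close>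
  \<and> (\<exists>!N. SLen_prop r ld rd N)
    \<comment> \<open>SVerti (with the N of SLen)\<close>
  \<and> (\<forall>N. SLen_prop r ld rd N \<longrightarrow> SVerti_prop T w r ld C N)"

end

theory Submission
  imports Defs
begin

lemma pow_R:
  "((a,b) \<in> {(a,b). b = Suc a \<and> b < (M::nat)} ^^ k) \<longleftrightarrow> (b = a + k \<and> (k = 0 \<or> b < M))"
proof (induction k arbitrary: b)
  case 0
  then show ?case by auto
next
  case (Suc k)
  show ?case
    by (auto simp: Suc.IH relcomp_unfold)
qed

lemma trancl_R:
  assumes "(a,b) \<in> {(a,b). b = Suc a \<and> b < (M::nat)}\<^sup>+" shows "a < b"
proof -
  from assms obtain k where "k > 0" "(a,b) \<in> {(a,b). b = Suc a \<and> b < (M::nat)} ^^ k"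
    by (auto simp: trancl_power)
  then show ?thesis by (simp add: pow_R)
qed

lemma rtrancl_R:
  assumes "0 < M"
  shows "((0,d) \<in> {(a,b). b = Suc a \<and> b < (M::nat)}\<^sup>*) \<longleftrightarrow> d < M"
proof
  assume "(0,d) \<in> {(a,b). b = Suc a \<and> b < (M::nat)}\<^sup>*"
  then obtain k where "(0,d) \<in> {(a,b). b = Suc a \<and> b < (M::nat)} ^^ k"
    by (auto simp: rtrancl_power)
  then show "d < M" using assms by (auto simp: pow_R)
next
  assume "d < M"
  then have "(0,d) \<in> {(a,b). b = Suc a \<and> b < (M::nat)} ^^ d" by (simp add: pow_R)
  then show "(0,d) \<in> {(a,b). b = Suc a \<and> b < (M::nat)}\<^sup>*" by (auto simp: rtrancl_power)
qed

theorem lemma4p3: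
  fixes Col :: "'c set" and T :: "'c tile set" and white :: 'c
  assumes "domino_system Col T white"
    and "solvable T white"
  shows "\<exists>(r :: (nat \<times> nat) set) ld rd lu ru (C :: 'c tile \<Rightarrow> nat set).
           is_snake T white r ld rd lu ru C"
proof -
  define w where "w = white"
  have nw2: "\<And>t. t \<in> T \<Longrightarrow> num_white w t \<le> 2"
    using assms(1) unfolding domino_system_def w_def by blast
  from assms(2) obtain n m :: nat where npos: "0 < n" and mpos: "0 < m" and cv: "covers T w n m"
    unfolding solvable_def w_def by blast
  from cv obtain \<xi> :: "nat \<times> nat \<Rightarrow> 'c tile" where
    cov0: "\<forall>x<n. \<forall>y<m. \<xi> (x,y) \<in> T
         \<and> (x = 0 \<longleftrightarrow> cl (\<xi> (x,y)) = w) \<and> (x = n - 1 \<longleftrightarrow> cr (\<xi> (x,y)) = w)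
         \<and> (y = 0 \<longleftrightarrow> cd (\<xi> (x,y)) = w) \<and> (y = m - 1 \<longleftrightarrow> cu (\<xi> (x,y)) = w)"
    and Hc0: "\<forall>x y. x + 1 < n \<and> y < m \<longrightarrow> H_compat (\<xi> (x,y)) (\<xi> (x+1,y))"
    and Vc0: "\<forall>x y. x < n \<and> y + 1 < m \<longrightarrow> V_compat (\<xi> (x,y)) (\<xi> (x,y+1))"
    unfolding covers_def by blast
  have cov: "\<xi> (x,y) \<in> T
         \<and> (x = 0 \<longleftrightarrow> cl (\<xi> (x,y)) = w) \<and> (x = n - 1 \<longleftrightarrow> cr (\<xi> (x,y)) = w)
         \<and> (y = 0 \<longleftrightarrow> cd (\<xi> (x,y)) = w) \<and> (y = m - 1 \<longleftrightarrow> cu (\<xi> (x,y)) = w)"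
    if "x < n" "y < m" for x y
    using cov0 that by blast
  have Hc: "H_compat (\<xi> (x,y)) (\<xi> (x+1,y))" if "x + 1 < n" "y < m" for x y
    using Hc0 that by blast
  have Vc: "V_compat (\<xi> (x,y)) (\<xi> (x,y+1))" if "x < n" "y + 1 < m" for x y
    using Vc0 that by blast
  have n2: "n \<ge> 2"
  proof (rule ccontr)
    assume "\<not> 2 \<le> n"
    then have "n = 1" using npos by simp
    with cov[of 0 0] mpos have "\<xi> (0,0) \<in> T" "cl (\<xi> (0,0)) = w" "cr (\<xi> (0,0)) = w" "cd (\<xi> (0,0)) = w"
      by auto
    with nw2[of "\<xi> (0,0)"] show False by (simp add: num_white_def)
  qed
  have m2: "m \<ge> 2"
  proof (rule ccontr)
    assume "\<not> 2 \<le> m"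
    then have "m = 1" using mpos by simp
    with cov[of 0 0] npos have "\<xi> (0,0) \<in> T" "cl (\<xi> (0,0)) = w" "cu (\<xi> (0,0)) = w" "cd (\<xi> (0,0)) = w"
      by auto
    with nw2[of "\<xi> (0,0)"] show False by (simp add: num_white_def)
  qed
  define M where "M = n * m"
  have Mpos: "0 < M" using npos mpos by (simp add: M_def)
  define R :: "(nat \<times> nat) set" where "R = {(a,b). b = Suc a \<and> b < M}"
  define tile where "tile d = \<xi> (d mod n, d div n)" for d
  define C where "C t = {k. k < M \<and> tile k = t}" for t
  have dlt: "d div n < m" if "d < M" for d
    using that npos by (simp add: M_def less_mult_imp_div_less mult.commute)
  have tp: "tile d \<in> T \<and> (cl (tile d) = w \<longleftrightarrow> d mod n = 0) \<and> (cr (tile d) = w \<longleftrightarrow> d mod n = n - 1)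
     \<and> (cd (tile d) = w \<longleftrightarrow> d div n = 0) \<and> (cu (tile d) = w \<longleftrightarrow> d div n = m - 1)" if "d < M" for d
    using cov[of "d mod n" "d div n"] dlt[OF that] npos unfolding tile_def by auto
  have reach: "(0,d) \<in> R\<^sup>* \<longleftrightarrow> d < M" for d
    unfolding R_def using rtrancl_R[OF Mpos] by blast
  have powR: "(a,b) \<in> R ^^ k \<longleftrightarrow> (b = a + k \<and> (k = 0 \<or> b < M))" for a b k
    unfolding R_def by (rule pow_R)
  have carr: "carries T C d t \<longleftrightarrow> d < M \<and> t = tile d" for d t
    using tp unfolding carries_def C_def by auto
  have nwd: "num_white w (tile d) = 2 \<longleftrightarrow> (d mod n = 0 \<or> d mod n = n - 1) \<and> (d div n = 0 \<or> d div n = m - 1)"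
    if "d < M" for d
    using tp[OF that] n2 m2 unfolding num_white_def by auto
  have dec: "x < n \<Longrightarrow> (y * n + x) div n = y \<and> (y * n + x) mod n = x" for x y
    by simp
  have Mdec: "M - 1 = (m - 1) * n + (n - 1)"
    using n2 m2 unfolding M_def by (cases m; cases n; simp add: algebra_simps)
  have lulM: "(m - 1) * n < M - 1"
    using Mdec n2 by simp
  have rdlu: "n - 1 < (m - 1) * n"
  proof -
    have "1 * n \<le> (m - 1) * n" using m2 by (intro mult_le_mono1) simp
    then show ?thesis using npos by linarith
  qed
  have snoloop: "(a, a) \<notin> R\<^sup>+" for a
    using trancl_R[of a a M] unfolding R_def by blast
  have slen_n: "SLen_prop R 0 (n - 1) N \<longleftrightarrow> N = n" for N
  proof
    assume "SLen_prop R 0 (n - 1) N"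
    then have "N > 0" "{d. (0, d) \<in> R ^^ (N - 1)} = {n - 1}" unfolding SLen_prop_def by auto
    then have "(0, n - 1) \<in> R ^^ (N - 1)" by blast
    with \<open>N > 0\<close> show "N = n" using powR npos by auto
  next
    assume "N = n"
    moreover have "n - 1 < M" using lulM rdlu by simp
    ultimately show "SLen_prop R 0 (n - 1) N"
      unfolding SLen_prop_def using npos by (auto simp: powR)
  qed
  have "is_snake T w R 0 (n - 1) ((m - 1) * n) (M - 1) C"
    unfolding is_snake_def
  proof (intro conjI)
    show "\<exists>p :: nat \<Rightarrow> nat. \<exists>L i j. 1 \<le> i \<and> i < j \<and> j < L \<and> p 0 = 0 \<and> p i = n - 1
      \<and> p j = (m - 1) * n \<and> p L = M - 1 \<and> (\<forall>k<L. (p k, p (Suc k)) \<in> R)"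
      apply (rule exI[of _ id], rule exI[of _ "M - 1"], rule exI[of _ "n - 1"], rule exI[of _ "(m - 1) * n"])
      using n2 rdlu lulM by (auto simp: R_def)
    show "\<forall>a\<in>{0, n - 1, (m - 1) * n, M - 1}. (a, a) \<notin> R\<^sup>+" using snoloop by blast
    show "\<forall>d. (0, d) \<in> R\<^sup>* \<longrightarrow> (\<exists>!t. carries T C d t)" by (auto simp: reach carr)
    show "{0, n - 1, (m - 1) * n, M - 1} = {d. (0, d) \<in> R\<^sup>* \<and> (\<exists>t. carries T C d t \<and> num_white w t = 2)}"
    proof (rule set_eqI, rule iffI)
      fix d assume "d \<in> {0, n - 1, (m - 1) * n, M - 1}"
      then have "d < M" using lulM rdlu Mpos by auto
      moreover have "(d mod n = 0 \<or> d mod n = n - 1) \<and> (d div n = 0 \<or> d div n = m - 1)"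
        using \<open>d \<in> _\<close> Mdec npos dec[of 0 "m - 1"] dec[of "n - 1" "m - 1"] by auto
      ultimately have "d < M \<and> (d mod n = 0 \<or> d mod n = n - 1) \<and> (d div n = 0 \<or> d div n = m - 1)"
        by blast
      then show "d \<in> {d. (0, d) \<in> R\<^sup>* \<and> (\<exists>t. carries T C d t \<and> num_white w t = 2)}"
        using nwd by (auto simp: reach carr)
    next
      fix d assume "d \<in> {d. (0, d) \<in> R\<^sup>* \<and> (\<exists>t. carries T C d t \<and> num_white w t = 2)}"
      then have dM: "d < M" and c: "(d mod n = 0 \<or> d mod n = n - 1) \<and> (d div n = 0 \<or> d div n = m - 1)"
        using nwd by (auto simp: reach carr)
      have deq: "d = d div n * n + d mod n" by simp
      from c show "d \<in> {0, n - 1, (m - 1) * n, M - 1}"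
      proof (elim conjE disjE)
        assume a: "d mod n = 0" and b: "d div n = 0"
        show ?thesis using deq[unfolded a b] by simp
      next
        assume a: "d mod n = n - 1" and b: "d div n = 0"
        show ?thesis using deq[unfolded a b] by simp
      next
        assume a: "d mod n = 0" and b: "d div n = m - 1"
        show ?thesis using deq[unfolded a b] by simp
      next
        assume a: "d mod n = n - 1" and b: "d div n = m - 1"
        show ?thesis using deq[unfolded a b] Mdec by simp
      qed
    qed
    show "\<exists>t. carries T C 0 t \<and> cl t = w \<and> cd t = w"
      using tp[of 0] Mpos by (auto simp: carr)
    show "\<exists>t. carries T C (n - 1) t \<and> cr t = w \<and> cd t = w"
      using tp[of "n - 1"] lulM rdlu npos dec[of "n - 1" 0] by (auto simp: carr)
    show "\<exists>t. carries T C ((m - 1) * n) t \<and> cl t = w \<and> cu t = w"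
      using tp[of "(m - 1) * n"] lulM npos by (auto simp: carr)
    show "\<exists>t. carries T C (M - 1) t \<and> cr t = w \<and> cu t = w"
      using tp[of "M - 1"] Mpos Mdec dec[of "n - 1" "m - 1"] npos by (auto simp: carr)
    show "\<forall>d t. (0, d) \<in> R\<^sup>* \<and> d \<noteq> M - 1 \<and> carries T C d t \<longrightarrow>
      (\<exists>t'\<in>T. (\<forall>e. (d, e) \<in> R \<longrightarrow> e \<in> C t') \<and> H_compat t t'
         \<and> (cd t = w \<longrightarrow> (cr t \<noteq> w \<longleftrightarrow> cd t' = w))
         \<and> (cu t = w \<longrightarrow> cu t' = w))"
    proof (intro allI impI, elim conjE)
      fix d t assume "(0, d) \<in> R\<^sup>*" "d \<noteq> M - 1" "carries T C d t"
      then have dM: "d < M" and t: "t = tile d" and sM: "Suc d < M" by (auto simp: reach carr)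
      note tpd = tp[OF dM] and tps = tp[OF sM]
      have succ: "\<forall>e. (d, e) \<in> R \<longrightarrow> e \<in> C (tile (Suc d))"
        by (auto simp: R_def C_def)
      show "\<exists>t'\<in>T. (\<forall>e. (d, e) \<in> R \<longrightarrow> e \<in> C t') \<and> H_compat t t'
         \<and> (cd t = w \<longrightarrow> (cr t \<noteq> w \<longleftrightarrow> cd t' = w))
         \<and> (cu t = w \<longrightarrow> cu t' = w)"
      proof (cases "Suc (d mod n) = n")
        case True
        then have e: "Suc d mod n = 0" "Suc d div n = Suc (d div n)" by (auto simp: mod_Suc div_Suc)
        have "Suc (d div n) < m" using dlt[OF sM] e by simp
        then show ?thesis using tpd tps True e succ t m2
          by (intro bexI[of _ "tile (Suc d)"]) (auto simp: H_compat_def)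
      next
        case False
        then have e: "Suc d mod n = Suc (d mod n)" "Suc d div n = d div n" by (auto simp: mod_Suc div_Suc)
        have "d mod n + 1 < n" using False npos
          by (metis Suc_eq_plus1 Suc_lessI mod_less_divisor)
        then have "H_compat (tile d) (tile (Suc d))"
          using Hc[of "d mod n" "d div n"] dlt[OF dM] e unfolding tile_def by simp
        then show ?thesis using tpd tps False e succ t npos n2
          by (intro bexI[of _ "tile (Suc d)"]) auto
      qed
    qed
    show "\<exists>!N. SLen_prop R 0 (n - 1) N" using slen_n by auto
    show "\<forall>N. SLen_prop R 0 (n - 1) N \<longrightarrow> SVerti_prop T w R 0 C N"
    proof (intro allI impI)
      fix N assume "SLen_prop R 0 (n - 1) N"
      then have N: "N = n" using slen_n by simp
      show "SVerti_prop T w R 0 C N"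
        unfolding SVerti_prop_def
      proof (intro allI impI, elim conjE)
        fix d t assume "(0, d) \<in> R\<^sup>*" "carries T C d t" "cu t \<noteq> w"
        then have dM: "d < M" and t: "t = tile d" and nu: "cu (tile d) \<noteq> w" by (auto simp: reach carr)
        have y: "d div n + 1 < m" using tp[OF dM] nu dlt[OF dM] by auto
        have dn: "(d + n) mod n = d mod n" "(d + n) div n = d div n + 1" using npos by (auto simp: div_add_self2)
        have dnM: "d + n < M"
        proof -
          have "d + n = (d div n + 1) * n + d mod n" using dn by (metis div_mult_mod_eq)
          also have "\<dots> < (d div n + 1) * n + n" using mod_less_divisor[OF npos, of d] by (rule add_strict_left_mono)
          also have "\<dots> = (d div n + 2) * n" by simp
          also have "\<dots> \<le> m * n" using y by (intro mult_right_mono) auto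
          finally show ?thesis by (simp add: M_def mult.commute)
        qed
        note tdn = tp[OF dnM]
        show "\<exists>t'\<in>T. (\<forall>e. (d, e) \<in> R ^^ N \<longrightarrow> e \<in> C t') \<and> V_compat t t'
            \<and> (cl t = w \<longleftrightarrow> cl t' = w) \<and> (cr t = w \<longleftrightarrow> cr t' = w)"
        proof (intro bexI[of _ "tile (d + n)"] conjI)
          show "\<forall>e. (d, e) \<in> R ^^ N \<longrightarrow> e \<in> C (tile (d + n))"
            using N npos dnM by (auto simp: powR C_def)
          show "V_compat t (tile (d + n))"
            using Vc[of "d mod n" "d div n"] y npos dn unfolding t tile_def by simp
        qed (use tdn tp[OF dM] dn t in auto)
      qed
    qed
  qed
  then show ?thesis unfolding w_def by blast
qed

end
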